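(* Let $\mathcal{E}$ be a finite-dimensional real inner product space, $\mathcal{K}\subseteq\mathcal{E}$ a closed convex cone, $A:\mathbb{R}^m\to\mathcal{E}$ linear with adjoint $A^*$, $c\in\mathcal{E}$, $b\in\mathbb{R}^m$. Consider (P): maximize $\langle b,y\rangle$ s.t. $c-Ay\in\mathcal{K}$; (D): minimize $\langle c,x\rangle$ s.t. $A^*x=b$, $x\in\mathcal{K}^*$. Let $s_0,\dots,s_{N-1}\in\mathcal{E}$ and faces $\mathcal{F}_0=\mathcal{K}$, $\mathcal{F}_{i+1}=\mathcal{F}_i\cap s_i^{\perp}$ satisfy $\langle c,s_i\rangle=0$, $A^*s_i=0$, $s_i\in\mathcal{F}_i^*\setminus\mathcal{F}_i^{\perp}$ for $i=0,\dots,N-1$, and put $\mathcal{F}=\mathcal{F}_N$. Consider (R/P): maximize $\langle b,y\rangle$ s.t. $c-Ay\in\mathcal{F}$; (R/D): minimize $\langle c,x\rangle$ s.t. $A^*x=b$, $x\in\mathcal{F}^*$. The recovery procedure takes an optimal solution $x$ of (R/D) and, for $i=N-1$ down to $0$, finds (if one exists) $\alpha\in\mathbb{R}$ with $x+\alpha s_i\in\mathcal{F}_i^*$ and replaces $x$ by $x+\alpha s_i$; if for some $i$ no such $\alpha$ exists it reports failure, otherwise it outputs the final $x$ and is said to succeed. Then: (1) If $\mathcal{F}_i^*+\operatorname{lin}s_i$ is closed for every $i=0,\dots,N-1$, the procedure succeeds and outputs an optimal solution of (D). (2) Suppose $y$ is an optimal solution of (R/P) and $x$ is an optimal solution of (R/D)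 with $\langle c,x\rangle=\langle b,y\rangle$. If the procedure succeeds on input $x$, then (P) and (D) have optimal solutions with zero duality gap.
   Context: $\mathcal{K}^*=\{z:\langle z,x\rangle\ge0\ \forall x\in\mathcal{K}\}$ is the dual cone; $\mathcal{F}^{\perp}$ is the orthogonal complement of the span of $\mathcal{F}$; $s^{\perp}=\{x:\langle s,x\rangle=0\}$; $\operatorname{lin}s$ is the line spanned by $s$. *)

theory Defs
  imports "HOL-Analysis.Analysis"
begin

definition dual_cone :: "'a::real_inner set \<Rightarrow> 'a set" where
  "dual_cone K = {z. \<forall>x\<in>K. 0 \<le> z \<bullet> x}"

fun face_seq :: "'a::real_inner set \<Rightarrow> (nat \<Rightarrow> 'a) \<Rightarrow> nat \<Rightarrow> 'a set" where
  "face_seq K s 0 = K"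
| "face_seq K s (Suc i) = face_seq K s i \<inter> {x. s i \<bullet> x = 0}"

definition primal_opt :: "'e::euclidean_space set \<Rightarrow> ('m::euclidean_space \<Rightarrow> 'e) \<Rightarrow> 'm \<Rightarrow> 'e \<Rightarrow> 'm \<Rightarrow> bool" where
  "primal_opt K A b c y \<longleftrightarrow> c - A y \<in> K \<and> (\<forall>y'. c - A y' \<in> K \<longrightarrow> b \<bullet> y' \<le> b \<bullet> y)"

definition dual_opt :: "'e::euclidean_space set \<Rightarrow> ('m::euclidean_space \<Rightarrow> 'e) \<Rightarrow> 'm \<Rightarrow> 'e \<Rightarrow> 'e \<Rightarrow> bool" where
  "dual_opt K A b c x \<longleftrightarrow> adjoint A x = b \<and> x \<in> dual_cone K \<and>
     (\<forall>x'. adjoint A x' = b \<and> x' \<in> dual_cone K \<longrightarrow> c \<bullet> x \<le> c \<bullet> x')"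

text \<open>Recovery procedure (nondeterministic in the choice of alpha).\<close>
definition recovery_reaches :: "'a::real_inner set \<Rightarrow> (nat \<Rightarrow> 'a) \<Rightarrow> nat \<Rightarrow> 'a \<Rightarrow> nat \<Rightarrow> (nat \<Rightarrow> 'a) \<Rightarrow> bool" where
  "recovery_reaches K s N x k z \<longleftrightarrow> z N = x \<and>
     (\<forall>i. k \<le> i \<and> i < N \<longrightarrow>
        (\<exists>\<alpha>::real. z i = z (Suc i) + \<alpha> *\<^sub>R s i \<and> z i \<in> dual_cone (face_seq K s i)))"

definition recovery_fails :: "'a::real_inner set \<Rightarrow> (nat \<Rightarrow> 'a) \<Rightarrow> nat \<Rightarrow> 'a \<Rightarrow> bool" where
  "recovery_fails K s N x \<longleftrightarrow> (\<exists>k z. 0 < k \<and> k \<le> N \<and> recovery_reaches K s N x k z \<and>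
     \<not> (\<exists>\<alpha>::real. z k + \<alpha> *\<^sub>R s (k - 1) \<in> dual_cone (face_seq K s (k - 1))))"

definition recovery_output :: "'a::real_inner set \<Rightarrow> (nat \<Rightarrow> 'a) \<Rightarrow> nat \<Rightarrow> 'a \<Rightarrow> 'a \<Rightarrow> bool" where
  "recovery_output K s N x x' \<longleftrightarrow> (\<exists>z. recovery_reaches K s N x 0 z \<and> z 0 = x')"

end

theory Submission
  imports Defs
begin

lemma sep_cone:
  fixes C :: "'a::euclidean_space set"
  assumes "closed C" "convex C" "0 \<in> C" "\<And>x t. x \<in> C \<Longrightarrow> 0 < t \<Longrightarrow> t *\<^sub>R x \<in> C" "z \<notin> C"
  shows "\<exists>w. w \<bullet> z < 0 \<and> (\<forall>v\<in>C. 0 \<le> w \<bullet> v)"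
proof -
  obtain a b where ab: "a \<bullet> z < b" "\<forall>x\<in>C. b < a \<bullet> x"
    using separating_hyperplane_closed_point[OF assms(2,1,5)] by blast
  have b0: "b < 0" using ab(2) assms(3) by force
  have "\<forall>v\<in>C. 0 \<le> a \<bullet> v"
  proof (intro ballI, rule ccontr)
    fix v assume v: "v \<in> C" "\<not> 0 \<le> a \<bullet> v"
    define t where "t = b / (a \<bullet> v)"
    have "0 < t" using b0 v by (simp add: t_def divide_neg_neg)
    then have "b < a \<bullet> (t *\<^sub>R v)" using ab(2) assms(4) v by blast
    also have "\<dots> = b" using v by (simp add: t_def)
    finally show False by simp
  qed
  thus ?thesis using ab b0 by (intro exI[of _ a]) auto
qed

lemma face_closed: "closed K \<Longrightarrow> closed (face_seq K s i)"
  by (induction i) (auto intro!: closed_Int closed_hyperplane)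

lemma face_convex: "convex K \<Longrightarrow> convex (face_seq K s i)"
  by (induction i) (auto intro!: convex_Int convex_hyperplane)

lemma face_0: "0 \<in> K \<Longrightarrow> 0 \<in> face_seq K s i"
  by (induction i) auto

lemma face_cone: "(\<And>x t. x \<in> K \<Longrightarrow> 0 < t \<Longrightarrow> t *\<^sub>R x \<in> K) \<Longrightarrow> x \<in> face_seq K s i \<Longrightarrow> 0 < t
   \<Longrightarrow> t *\<^sub>R x \<in> face_seq K s i"
  by (induction i arbitrary: x) auto

lemma face_sub: "face_seq K s i \<subseteq> K"
  by (induction i) auto

lemma dual_cone_0: "0 \<in> dual_cone K"
  by (simp add: dual_cone_def)

lemma dual_cone_mono: "A \<subseteq> B \<Longrightarrow> dual_cone B \<subseteq> dual_cone A"
  by (auto simp: dual_cone_def)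

lemma dual_cone_convex: "convex (dual_cone K)"
  unfolding convex_def dual_cone_def
  by (auto simp: inner_add_left intro!: add_nonneg_nonneg mult_nonneg_nonneg)

lemma step_exists:
  fixes K :: "'e::euclidean_space set"
  assumes cK: "closed K" and vK: "convex K" and zK: "0 \<in> K"
    and coK: "\<And>x t. x \<in> K \<Longrightarrow> 0 < t \<Longrightarrow> t *\<^sub>R x \<in> K"
    and cS: "closed {u + v | u v. u \<in> dual_cone (face_seq K s i) \<and> v \<in> span {s i}}"
    and z: "z \<in> dual_cone (face_seq K s (Suc i))"
  shows "\<exists>\<alpha>::real. z + \<alpha> *\<^sub>R s i \<in> dual_cone (face_seq K s i)"
proof -
  define F where "F = face_seq K s i"
  define D where "D = dual_cone F"
  define S where "S = {u + v | u v. u \<in> D \<and> v \<in> span {s i}}"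
  have sp: "span {s i} = range (\<lambda>k. k *\<^sub>R s i)" by (rule span_singleton)
  have Smem: "x \<in> S \<longleftrightarrow> (\<exists>u \<beta>. u \<in> D \<and> x = u + \<beta> *\<^sub>R s i)" for x
    unfolding S_def sp by blast
  have D0: "0 \<in> D" by (simp add: D_def dual_cone_0)
  have Dcone: "t *\<^sub>R u \<in> D" if "u \<in> D" "0 < t" for u t
    using that by (auto simp: D_def dual_cone_def)
  have zS: "z \<in> S"
  proof (rule ccontr)
    assume nz: "z \<notin> S"
    have "closed S" using cS by (simp add: S_def D_def F_def)
    moreover have "convex S"
      unfolding convex_def
    proof (intro allI impI ballI)
      fix x y :: 'e and u v :: real
      assume x: "x \<in> S" and y: "y \<in> S" and uv: "0 \<le> u" "0 \<le> v" "u + v = 1"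
      obtain u1 b1 where 1: "u1 \<in> D" "x = u1 + b1 *\<^sub>R s i" using x[unfolded Smem] by blast
      obtain u2 b2 where 2: "u2 \<in> D" "y = u2 + b2 *\<^sub>R s i" using y[unfolded Smem] by blast
      have "u *\<^sub>R u1 + v *\<^sub>R u2 \<in> D"
        using dual_cone_convex[of F] 1 2 uv unfolding D_def convex_def by blast
      moreover have "u *\<^sub>R x + v *\<^sub>R y = (u *\<^sub>R u1 + v *\<^sub>R u2) + (u * b1 + v * b2) *\<^sub>R s i"
        using 1 2 by (simp add: algebra_simps)
      ultimately show "u *\<^sub>R x + v *\<^sub>R y \<in> S" unfolding Smem by blast
    qed
    moreover have "0 \<in> S" unfolding Smem using D0 by (intro exI[of _ 0] exI[of _ "0::real"]) simp
    moreover have "t *\<^sub>R x \<in> S" if xS: "x \<in> S" and tp: "0 < t" for x t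
    proof -
      obtain u b where ub: "u \<in> D" "x = u + b *\<^sub>R s i" using xS[unfolded Smem] by blast
      have e: "t *\<^sub>R x = t *\<^sub>R u + (t * b) *\<^sub>R s i" using ub by (simp add: algebra_simps)
      have "t *\<^sub>R u \<in> D" using Dcone ub(1) tp by blast
      then show ?thesis unfolding Smem e by (intro exI[of _ "t *\<^sub>R u"] exI[of _ "t * b"]) simp
    qed
    ultimately obtain w where w: "w \<bullet> z < 0" "\<forall>v\<in>S. 0 \<le> w \<bullet> v"
      using sep_cone[of S z] nz by blast
    have "s i \<in> S" unfolding Smem using D0 by (intro exI[of _ 0] exI[of _ "1::real"]) simp
    moreover have "- s i \<in> S" unfolding Smem using D0 by (intro exI[of _ 0] exI[of _ "-1::real"]) simp
    ultimately have "0 \<le> w \<bullet> s i" "0 \<le> w \<bullet> (- s i)" using w(2) by blast+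
    then have ws: "s i \<bullet> w = 0" by (simp add: inner_commute)
    have wD: "\<forall>u\<in>D. 0 \<le> w \<bullet> u"
    proof
      fix u assume "u \<in> D"
      then have "u \<in> S" unfolding Smem by (intro exI[of _ u] exI[of _ "0::real"]) simp
      thus "0 \<le> w \<bullet> u" using w(2) by blast
    qed
    have wF: "w \<in> F"
    proof (rule ccontr)
      assume "w \<notin> F"
      then obtain a where a: "a \<bullet> w < 0" "\<forall>v\<in>F. 0 \<le> a \<bullet> v"
        using sep_cone[of F w] face_closed[OF cK] face_convex[OF vK] face_0[OF zK]
          face_cone[OF coK] unfolding F_def by blast
      have "a \<in> D" using a(2) by (simp add: D_def dual_cone_def)
      then have "0 \<le> w \<bullet> a" using wD by blast
      thus False using a(1) by (simp add: inner_commute)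
    qed
    have "w \<in> face_seq K s (Suc i)" using wF ws by (simp add: F_def)
    then have "0 \<le> z \<bullet> w" using z by (simp add: dual_cone_def)
    thus False using w(1) by (simp add: inner_commute)
  qed
  then obtain u \<beta> where "u \<in> D" "z = u + \<beta> *\<^sub>R s i" unfolding Smem by blast
  then have "z + (- \<beta>) *\<^sub>R s i \<in> dual_cone (face_seq K s i)" by (simp add: D_def F_def)
  thus ?thesis by blast
qed

lemma reach_mem:
  assumes "recovery_reaches K s N x k z" "k \<le> N" "x \<in> dual_cone (face_seq K s N)"
  shows "z k \<in> dual_cone (face_seq K s k)"
  using assms unfolding recovery_reaches_def
  by (cases "k = N") auto

lemma reach_inv:
  fixes A :: "'m::euclidean_space \<Rightarrow> 'e::euclidean_space"
  assumes r: "recovery_reaches K s N x k z" and kN: "k \<le> N" and A: "linear A"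
    and sc: "\<And>i. i < N \<Longrightarrow> c \<bullet> s i = 0" and sA: "\<And>i. i < N \<Longrightarrow> adjoint A (s i) = 0"
  shows "adjoint A (z k) = adjoint A x \<and> c \<bullet> z k = c \<bullet> x"
  using kN
proof (induction k rule: inc_induct)
  case base
  then show ?case using r by (simp add: recovery_reaches_def)
next
  case (step n)
  have "k \<le> n" using step.hyps by simp
  then obtain \<alpha> where e: "z n = z (Suc n) + \<alpha> *\<^sub>R s n"
    using r step.hyps unfolding recovery_reaches_def by blast
  have la: "linear (adjoint A)" using adjoint_linear[OF A] .
  have "adjoint A (z n) = adjoint A (z (Suc n)) + \<alpha> *\<^sub>R adjoint A (s n)"
    using e la by (simp add: linear_add linear_scale)
  moreover have "c \<bullet> z n = c \<bullet> z (Suc n) + \<alpha> * (c \<bullet> s n)"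
    using e by (simp add: inner_add_right)
  ultimately show ?case using step sc sA by simp
qed

theorem lemma8:
  fixes K :: "'e::euclidean_space set"
    and A :: "real^'m \<Rightarrow> 'e" and b :: "real^'m" and c :: "'e"
    and s :: "nat \<Rightarrow> 'e" and N :: nat
  assumes K: "closed K" "convex_cone K"
    and A: "linear A"
    and s_c: "\<And>i. i < N \<Longrightarrow> c \<bullet> s i = 0"
    and s_A: "\<And>i. i < N \<Longrightarrow> adjoint A (s i) = 0"
    and s_F: "\<And>i. i < N \<Longrightarrow>
               s i \<in> dual_cone (face_seq K s i) - orthogonal_comp (span (face_seq K s i))"
  shows "(\<forall>x. (\<forall>i<N. closed {u + v | u v. u \<in> dual_cone (face_seq K s i) \<and> v \<in> span {s i}})
             \<and> dual_opt (face_seq K s N) A b c x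
           \<longrightarrow> \<not> recovery_fails K s N x
               \<and> (\<exists>x'. recovery_output K s N x x')
               \<and> (\<forall>x'. recovery_output K s N x x' \<longrightarrow> dual_opt K A b c x'))
         \<and> (\<forall>x y. primal_opt (face_seq K s N) A b c y \<and> dual_opt (face_seq K s N) A b c x
             \<and> c \<bullet> x = b \<bullet> y \<and> (\<exists>x'. recovery_output K s N x x')
           \<longrightarrow> (\<exists>y' x'. primal_opt K A b c y' \<and> dual_opt K A b c x' \<and> c \<bullet> x' = b \<bullet> y'))"
  proof -
  have vK: "convex K" using K(2) by (simp add: convex_cone_def)
  have zK: "0 \<in> K" using K(2) by (rule convex_cone_contains_0)
  have coK: "\<And>x t. x \<in> K \<Longrightarrow> 0 < t \<Longrightarrow> t *\<^sub>R x \<in> K"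
    using K(2) convex_cone_scaleR less_imp_le by blast
  have dK: "dual_cone K \<subseteq> dual_cone (face_seq K s N)"
    by (rule dual_cone_mono[OF face_sub])
  have part1: "\<not> recovery_fails K s N x \<and> (\<exists>x'. recovery_output K s N x x')
               \<and> (\<forall>x'. recovery_output K s N x x' \<longrightarrow> dual_opt K A b c x')"
    if cl: "\<forall>i<N. closed {u + v | u v. u \<in> dual_cone (face_seq K s i) \<and> v \<in> span {s i}}"
      and xo: "dual_opt (face_seq K s N) A b c x" for x
  proof -
    have xD: "x \<in> dual_cone (face_seq K s N)" and xA: "adjoint A x = b"
      and xopt: "\<And>x'. adjoint A x' = b \<Longrightarrow> x' \<in> dual_cone (face_seq K s N) \<Longrightarrow> c \<bullet> x \<le> c \<bullet> x'"
      using xo by (auto simp: dual_opt_def)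
    have stepk: "\<exists>\<alpha>::real. z k + \<alpha> *\<^sub>R s (k - 1) \<in> dual_cone (face_seq K s (k - 1))"
      if r: "recovery_reaches K s N x k z" and k: "0 < k" "k \<le> N" for k z
    proof -
      have zk: "z k \<in> dual_cone (face_seq K s k)" using reach_mem[OF r k(2) xD] .
      have kk: "k = Suc (k - 1)" using k by simp
      have "closed {u + v | u v. u \<in> dual_cone (face_seq K s (k - 1)) \<and> v \<in> span {s (k - 1)}}"
        using cl k by simp
      moreover have "z k \<in> dual_cone (face_seq K s (Suc (k - 1)))" using zk kk by simp
      ultimately show ?thesis using step_exists[OF K(1) vK zK coK] by blast
    qed
    have nf: "\<not> recovery_fails K s N x"
      unfolding recovery_fails_def using stepk by blast
    have "\<exists>z. recovery_reaches K s N x 0 z"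
    proof -
      have "0 \<le> N" by simp
      then show ?thesis
      proof (induction rule: inc_induct)
        case base
        show ?case by (rule exI[of _ "\<lambda>_. x"]) (auto simp: recovery_reaches_def)
      next
        case (step n)
        then obtain z where r: "recovery_reaches K s N x (Suc n) z" by blast
        obtain \<alpha> where a: "z (Suc n) + \<alpha> *\<^sub>R s n \<in> dual_cone (face_seq K s n)"
          using stepk[OF r] step.hyps by force
        define z' where "z' = z(n := z (Suc n) + \<alpha> *\<^sub>R s n)"
        have "recovery_reaches K s N x n z'"
          unfolding recovery_reaches_def
        proof (intro conjI allI impI)
          show "z' N = x" using r step.hyps by (simp add: z'_def recovery_reaches_def)
          fix i assume i: "n \<le> i \<and> i < N"
          show "\<exists>\<alpha>. z' i = z' (Suc i) + \<alpha> *\<^sub>R s i \<and> z' i \<in> dual_cone (face_seq K s i)"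
          proof (cases "i = n")
            case True
            then show ?thesis using a by (simp add: z'_def)
          next
            case False
            then have "Suc n \<le> i" "i < N" using i by auto
            then show ?thesis using r False by (simp add: z'_def recovery_reaches_def)
          qed
        qed
        then show ?case by blast
      qed
    qed
    then have ex: "\<exists>x'. recovery_output K s N x x'" by (auto simp: recovery_output_def)
    have "dual_opt K A b c x'" if ro: "recovery_output K s N x x'" for x'
    proof -
      obtain z where r: "recovery_reaches K s N x 0 z" and z0: "z 0 = x'"
        using ro by (auto simp: recovery_output_def)
      have m: "x' \<in> dual_cone K" using reach_mem[OF r _ xD] z0 by simp
      have inv: "adjoint A x' = adjoint A x \<and> c \<bullet> x' = c \<bullet> x"
        using reach_inv[OF r _ A s_c s_A] z0 by simp
      show ?thesis unfolding dual_opt_def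
        using m inv xA xopt dK by auto
    qed
    then show ?thesis using nf ex by blast
  qed
  have part2: "\<exists>y' x'. primal_opt K A b c y' \<and> dual_opt K A b c x' \<and> c \<bullet> x' = b \<bullet> y'"
    if yo: "primal_opt (face_seq K s N) A b c y" and xo: "dual_opt (face_seq K s N) A b c x"
      and eq: "c \<bullet> x = b \<bullet> y" and ro: "\<exists>x'. recovery_output K s N x x'" for x y
  proof -
    have xD: "x \<in> dual_cone (face_seq K s N)" and xA: "adjoint A x = b"
      using xo by (auto simp: dual_opt_def)
    obtain x' z where r: "recovery_reaches K s N x 0 z" and z0: "z 0 = x'"
      using ro by (auto simp: recovery_output_def)
    have m: "x' \<in> dual_cone K" using reach_mem[OF r _ xD] z0 by simp
    have inv: "adjoint A x' = adjoint A x \<and> c \<bullet> x' = c \<bullet> x"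
      using reach_inv[OF r _ A s_c s_A] z0 by simp
    have yK: "c - A y \<in> K" using yo face_sub[of K s N] by (auto simp: primal_opt_def)
    have popt: "primal_opt K A b c y"
      unfolding primal_opt_def
    proof (intro conjI allI impI)
      show "c - A y \<in> K" by (rule yK)
      fix y'' assume h: "c - A y'' \<in> K"
      have "0 \<le> x' \<bullet> (c - A y'')" using m h by (simp add: dual_cone_def)
      moreover have "b \<bullet> y'' = x' \<bullet> A y''"
        using inv xA adjoint_clauses(2)[OF A] by metis
      ultimately have "b \<bullet> y'' \<le> x' \<bullet> c" by (simp add: inner_diff_right)
      also have "\<dots> = b \<bullet> y" using inv eq by (simp add: inner_commute)
      finally show "b \<bullet> y'' \<le> b \<bullet> y" .
    qed
    have dopt: "dual_opt K A b c x'"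
      unfolding dual_opt_def
    proof (intro conjI allI impI)
      show "adjoint A x' = b" using inv xA by simp
      show "x' \<in> dual_cone K" by (rule m)
      fix x'' assume h: "adjoint A x'' = b \<and> x'' \<in> dual_cone K"
      have "0 \<le> x'' \<bullet> (c - A y)" using h yK by (simp add: dual_cone_def)
      moreover have "b \<bullet> y = x'' \<bullet> A y"
        using h adjoint_clauses(2)[OF A] by metis
      ultimately have "b \<bullet> y \<le> x'' \<bullet> c" by (simp add: inner_diff_right)
      then show "c \<bullet> x' \<le> c \<bullet> x''" using inv eq by (simp add: inner_commute)
    qed
    show ?thesis using popt dopt inv eq by auto
  qed
  show ?thesis using part1 part2 by blast
qed

end
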